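(* Let $n\ge2$, let $\Omega$ be homogeneous of degree zero and integrable on $S^{n-1}$, and let $b\in C_0^\infty(\mathbb{R}^n)$. Then there is a constant $C$ (depending on $n$, $\Omega$, $b$) such that for all $l\in\mathbb{N}$, all $j_0\in\mathbb{Z}_-$, all $f$ and all $x\in\mathbb{R}^n$, $$\big|\widetilde{\mathcal{M}}^{l,j_0}_{\Omega,b}f(x)-\widetilde{\mathcal{M}}^l_{\Omega,b}f(x)\big|\le C\,2^{j_0}MM_\Omega f(x).$$
   Context: For $t\in[1,2]$, $j\in\mathbb{Z}$: $K^j_t(x)=2^{-j}\frac{\Omega(x)}{|x|^{n-1}}\chi_{\{2^{j-1}t<|x|\le2^jt\}}(x)$. $\phi\in C_0^\infty(\mathbb{R}^n)$ is nonnegative, $\int\phi=1$, $\mathrm{supp}\,\phi\subset\{|x|\le1/4\}$, $\phi_l(y)=2^{-nl}\phi(2^{-l}y)$. Let $F^l_{j,b}f(x,t)=\int_{\mathbb{R}^n}(b(x)-b(y))K^j_t*\phi_{j-l}(x-y)f(y)\,dy$, $\widetilde{\mathcal{M}}^l_{\Omega,b}f(x)=\big(\int_1^2\sum_{j\in\mathbb{Z}}|F^l_{j,b}f(x,t)|^2dt\big)^{1/2}$ and $\widetilde{\mathcal{M}}^{l,j_0}_{\Omega,b}f(x)=\big(\int_1^2\sum_{j\in\mathbb{Z},\,j>j_0}|F^l_{j,b}f(x,t)|^2dt\big)^{1/2}$. $M$ is the Hardy–Littlewood maximal operator and $M_\Omega h(x)=\sup_{r>0}\frac{1}{|B(x,r)|}\int_{B(x,r)}|\Omega(x-y)h(y)|\,dy$.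 $\mathbb{Z}_-$ denotes the negative integers. *)

theory Defs
  imports "HOL-Analysis.Analysis"
begin

fun iter_dderiv :: "'a::euclidean_space list \<Rightarrow> ('a \<Rightarrow> real) \<Rightarrow> 'a \<Rightarrow> real" where
  "iter_dderiv [] f = f"
| "iter_dderiv (v # vs) f = (\<lambda>x. frechet_derivative (iter_dderiv vs f) (at x) v)"

definition smooth_fun :: "('a::euclidean_space \<Rightarrow> real) \<Rightarrow> bool" where
  "smooth_fun f \<longleftrightarrow> (\<forall>vs x. iter_dderiv vs f differentiable (at x))"

definition C0_infty :: "('a::euclidean_space \<Rightarrow> real) \<Rightarrow> bool" where
  "C0_infty f \<longleftrightarrow> smooth_fun f \<and> compact (closure {x. f x \<noteq> 0})"

text \<open>Standard (cone) construction: sigma(A) = n * |{r theta : 0 < r \<le> 1, theta \<in> A}|.\<close>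
definition sphere_measure :: "'a::euclidean_space measure" where
  "sphere_measure = density
     (distr (restrict_space lborel (cball 0 1 - {0})) borel (\<lambda>x. x /\<^sub>R norm x))
     (\<lambda>_. ennreal (real DIM('a)))"

definition Kjt :: "(real^'n \<Rightarrow> real) \<Rightarrow> int \<Rightarrow> real \<Rightarrow> real^'n \<Rightarrow> real" where
  "Kjt \<Omega> j t x = (2 powr (- real_of_int j)) * \<Omega> x / norm x ^ (CARD('n) - 1)
     * indicator {y. 2 powr (real_of_int j - 1) * t < norm y \<and> norm y \<le> 2 powr (real_of_int j) * t} x"

definition phi_sc :: "(real^'n \<Rightarrow> real) \<Rightarrow> int \<Rightarrow> real^'n \<Rightarrow> real" where
  "phi_sc \<phi> l y = 2 powr (- real CARD('n) * real_of_int l) * \<phi> ((2 powr (- real_of_int l)) *\<^sub>R y)"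

definition Kconv :: "(real^'n \<Rightarrow> real) \<Rightarrow> (real^'n \<Rightarrow> real) \<Rightarrow> nat \<Rightarrow> int \<Rightarrow> real \<Rightarrow> real^'n \<Rightarrow> real" where
  "Kconv \<Omega> \<phi> l j t z = (LINT w|lborel. Kjt \<Omega> j t (z - w) * phi_sc \<phi> (j - int l) w)"

definition Fljb :: "(real^'n \<Rightarrow> real) \<Rightarrow> (real^'n \<Rightarrow> real) \<Rightarrow> nat \<Rightarrow> int \<Rightarrow> (real^'n \<Rightarrow> real)
     \<Rightarrow> (real^'n \<Rightarrow> real) \<Rightarrow> real^'n \<Rightarrow> real \<Rightarrow> real" where
  "Fljb \<Omega> \<phi> l j b f x t = (LINT y|lborel. (b x - b y) * Kconv \<Omega> \<phi> l j t (x - y) * f y)"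

definition esqrt :: "ennreal \<Rightarrow> ennreal" where
  "esqrt a = (if a = \<infinity> then \<infinity> else ennreal (sqrt (enn2real a)))"

text \<open>Square function with j ranging over a set J of integers
  (J = UNIV gives the full operator, J = {j0<..} the truncated one).\<close>
definition Mtilde :: "(real^'n \<Rightarrow> real) \<Rightarrow> (real^'n \<Rightarrow> real) \<Rightarrow> nat \<Rightarrow> int set
     \<Rightarrow> (real^'n \<Rightarrow> real) \<Rightarrow> (real^'n \<Rightarrow> real) \<Rightarrow> real^'n \<Rightarrow> ennreal" where
  "Mtilde \<Omega> \<phi> l J b f x = esqrt (\<integral>\<^sup>+ t \<in> {1..2}.
      (\<integral>\<^sup>+ j. ennreal ((Fljb \<Omega> \<phi> l j b f x t)\<^sup>2) \<partial>count_space J) \<partial>lborel)"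

definition HL_max :: "(real^'n \<Rightarrow> ennreal) \<Rightarrow> real^'n \<Rightarrow> ennreal" where
  "HL_max g x = (SUP r\<in>{0<..}. (\<integral>\<^sup>+ y \<in> ball x r. g y \<partial>lborel) / emeasure lborel (ball x r))"

definition M_Omega :: "(real^'n \<Rightarrow> real) \<Rightarrow> (real^'n \<Rightarrow> real) \<Rightarrow> real^'n \<Rightarrow> ennreal" where
  "M_Omega \<Omega> h x = (SUP r\<in>{0<..}.
      (\<integral>\<^sup>+ y \<in> ball x r. ennreal \<bar>\<Omega> (x - y) * h y\<bar> \<partial>lborel) / emeasure lborel (ball x r))"

end

theory Submission
  imports Defs
begin

lemma esqrt_sq_ge: "a \<le> (esqrt a)^2"
proof (cases a)
  case (real r) then show ?thesis
    by (simp add: esqrt_def ennreal_power)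
qed (simp add: esqrt_def)

lemma esqrt_le: "a \<le> y^2 \<Longrightarrow> esqrt a \<le> y"
proof (cases a)
  case (real r)
  assume h: "a \<le> y^2"
  show ?thesis
  proof (cases y)
    case (real s)
    with h \<open>a = ennreal r\<close> \<open>0 \<le> r\<close> have "r \<le> s^2"
      by (simp add: ennreal_power)
    then have "sqrt r \<le> s" using \<open>0 \<le> s\<close> by (metis real_sqrt_le_mono real_sqrt_pow2_iff abs_of_nonneg real_sqrt_abs)
    then show ?thesis using \<open>a = ennreal r\<close> \<open>0 \<le> r\<close> real
      by (simp add: esqrt_def)
  qed simp
next
  case top
  assume h: "a \<le> y^2"
  then have "y^2 = top" using top by (simp add: top_unique)
  then have "y = top" by (simp add: power2_eq_square ennreal_mult_eq_top_iff)
  then show ?thesis by simp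
qed

lemma esqrt_mono: "a \<le> b \<Longrightarrow> esqrt a \<le> esqrt b"
  by (rule esqrt_le) (use esqrt_sq_ge[of b] in auto)

lemma esqrt_add_le: "a \<le> S + e^2 \<Longrightarrow> esqrt a \<le> esqrt S + (e::ennreal)"
proof (rule esqrt_le)
  assume "a \<le> S + e^2"
  also have "\<dots> \<le> (esqrt S)^2 + e^2" using esqrt_sq_ge[of S] by (simp add: add_right_mono)
  also have "\<dots> \<le> (esqrt S + e)^2"
    by (simp add: power2_eq_square algebra_simps add_increasing2)
  finally show "a \<le> (esqrt S + e)^2" .
qed

lemma norm_integral_le_nn:
  "ennreal (norm (integral\<^sup>L M g)) \<le> (\<integral>\<^sup>+ x. ennreal (norm (g x)) \<partial>M)"
  by (cases "integrable M g") (auto simp: integral_norm_bound_ennreal not_integrable_integral_eq)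

lemma Omega_meas:
  fixes \<Omega> :: "real^'n \<Rightarrow> real"
  assumes "integrable sphere_measure \<Omega>"
  shows "\<Omega> \<in> borel_measurable borel"
proof -
  have "\<Omega> \<in> borel_measurable sphere_measure" using assms by auto
  moreover have e: "sets (sphere_measure :: (real^'n) measure) = sets borel"
    by (simp add: sphere_measure_def)
  ultimately show ?thesis using measurable_cong_sets[OF e refl] by simp
qed

lemma f_meas:
  fixes f :: "real^'n \<Rightarrow> real"
  assumes "\<forall>K. compact K \<longrightarrow> set_integrable lborel K f"
  shows "f \<in> borel_measurable borel"
proof -
  have m: "(\<lambda>x. indicator (cball 0 (real k)) x *\<^sub>R f x) \<in> borel_measurable borel" for k :: nat
  proof -
    have "set_integrable lborel (cball 0 (real k)) f" using assms compact_cball by blast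
    then have "(\<lambda>x. indicator (cball 0 (real k)) x *\<^sub>R f x) \<in> borel_measurable lborel"
      unfolding set_integrable_def by auto
    then show ?thesis by simp
  qed
  have lim: "(\<lambda>k. indicator (cball 0 (real k)) x *\<^sub>R f x) \<longlonglongrightarrow> f x" for x
  proof (rule tendsto_eventually)
    obtain k0 :: nat where "norm x \<le> real k0" using real_arch_simple by blast
    then show "\<forall>\<^sub>F k in sequentially. indicator (cball 0 (real k)) x *\<^sub>R f x = f x"
    proof (intro eventually_sequentiallyI[of k0])
      fix k assume "k0 \<le> k"
      then have "real k0 \<le> real k" by simp
      with \<open>norm x \<le> real k0\<close> have "x \<in> cball 0 (real k)" by (simp add: dist_norm)
      then show "indicator (cball 0 (real k)) x *\<^sub>R f x = f x" by simp
    qed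
  qed
  show ?thesis
    by (rule borel_measurable_LIMSEQ_metric[where f="\<lambda>k x. indicator (cball 0 (real k)) x *\<^sub>R f x", OF m lim])
qed

lemma Kjt_meas:
  fixes \<Omega> :: "real^'n \<Rightarrow> real"
  assumes [measurable]: "\<Omega> \<in> borel_measurable borel"
  shows "(\<lambda>p. Kjt \<Omega> j (fst p) (snd p)) \<in> borel_measurable (borel \<Otimes>\<^sub>M borel)"
proof -
  have p: "Measurable.pred (borel \<Otimes>\<^sub>M borel) (\<lambda>p::real \<times> (real^'n). a * fst p < norm (snd p) \<and> norm (snd p) \<le> c * fst p)" for a c
    by measurable
  have e: "Kjt \<Omega> j (fst p) (snd p) = (2 powr (- real_of_int j)) * \<Omega> (snd p) / norm (snd p) ^ (CARD('n) - 1)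
     * (if 2 powr (real_of_int j - 1) * fst p < norm (snd p) \<and> norm (snd p) \<le> 2 powr (real_of_int j) * fst p then 1 else 0)" for p :: "real \<times> (real^'n)"
    by (simp add: Kjt_def indicator_def)
  show ?thesis unfolding e
    by (intro borel_measurable_times borel_measurable_divide measurable_If predE[OF p] borel_measurable_const
        borel_measurable_power measurable_compose[OF measurable_snd assms] measurable_compose[OF measurable_snd borel_measurable_norm])
qed

lemma C0_diff:
  assumes "C0_infty b"
  shows "b differentiable (at x)"
  using assms iter_dderiv.simps(1)[of b] unfolding C0_infty_def smooth_fun_def by metis

lemma C0_cont:
  assumes "C0_infty b"
  shows "continuous_on UNIV b"
  using C0_diff[OF assms] by (simp add: continuous_at_imp_continuous_on differentiable_imp_continuous_within)

lemma C0_bounded: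
  fixes b :: "'a::euclidean_space \<Rightarrow> real"
  assumes "C0_infty b"
  shows "\<exists>P\<ge>0. \<forall>x. \<bar>b x\<bar> \<le> P"
proof -
  let ?S = "closure {x. b x \<noteq> 0}"
  have cS: "compact ?S" using assms unfolding C0_infty_def by auto
  have "compact (b ` ?S)"
    using compact_continuous_image[OF continuous_on_subset[OF C0_cont[OF assms]] cS] by auto
  then obtain P where P: "\<forall>y\<in>b ` ?S. norm y \<le> P" using compact_imp_bounded bounded_iff by metis
  show ?thesis
  proof (intro exI[of _ "max P 0"] conjI allI)
    fix x show "\<bar>b x\<bar> \<le> max P 0"
    proof (cases "b x = 0")
      case False then have "x \<in> ?S" by (simp add: closure_def)
      then show ?thesis using P by force
    qed simp
  qed simp
qed

lemma C0_lipschitz: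
  fixes b :: "real^'n \<Rightarrow> real"
  assumes "C0_infty b"
  shows "\<exists>L\<ge>0. \<forall>x y. \<bar>b x - b y\<bar> \<le> L * norm (x - y)"
proof -
  let ?S = "closure {x. b x \<noteq> 0}"
  have cS: "compact ?S" using assms unfolding C0_infty_def by auto
  define D where "D x = frechet_derivative b (at x)" for x
  have hd: "(b has_derivative D x) (at x)" for x
    using C0_diff[OF assms] frechet_derivative_works unfolding D_def by blast
  have lin: "linear (D x)" for x using hd[of x] has_derivative_linear by blast
  define G where "G x = (\<Sum>i\<in>UNIV. \<bar>D x (axis i 1)\<bar>)" for x
  have gd: "(\<lambda>x. D x v) differentiable (at y)" for v y
  proof -
    have "iter_dderiv [v] b differentiable (at y)"
      using assms unfolding C0_infty_def smooth_fun_def by blast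
    moreover have "iter_dderiv [v] b = (\<lambda>x. D x v)" by (simp add: D_def)
    ultimately show ?thesis by simp
  qed
  have Gc: "continuous_on UNIV G"
    unfolding G_def
    by (intro continuous_intros continuous_at_imp_continuous_on ballI differentiable_imp_continuous_within gd)
  have "compact (G ` ?S)"
    using compact_continuous_image[OF continuous_on_subset[OF Gc] cS] by auto
  then obtain L where L: "\<forall>y\<in>G ` ?S. norm y \<le> L" using compact_imp_bounded bounded_iff by metis
  have D0: "D x = (\<lambda>h. 0)" if "x \<notin> ?S" for x
  proof -
    have "((\<lambda>x. 0::real) has_derivative (\<lambda>h. 0)) (at x)" by simp
    then have "(b has_derivative (\<lambda>h. 0)) (at x)"
      by (rule has_derivative_transform_within_open[where s="- ?S"])
         (use that closure_subset[of "{x. b x \<noteq> 0}"] in \<open>auto simp: open_Compl\<close>)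
    then show ?thesis using frechet_derivative_at unfolding D_def by metis
  qed
  have GL: "G x \<le> max L 0" for x
  proof (cases "x \<in> ?S")
    case True then show ?thesis using L by force
  next
    case False then show ?thesis by (simp add: G_def D0)
  qed
  have Dbound: "\<bar>D x h\<bar> \<le> max L 0 * norm h" for x h
  proof -
    have "D x h = D x (\<Sum>i\<in>UNIV. h$i *\<^sub>R axis i 1)"
      using basis_expansion[of h] by (simp add: scalar_mult_eq_scaleR)
    also have "\<dots> = (\<Sum>i\<in>UNIV. h$i * D x (axis i 1))"
      using lin[of x] by (simp add: linear_sum linear_scale)
    finally have "\<bar>D x h\<bar> \<le> (\<Sum>i\<in>UNIV. \<bar>h$i\<bar> * \<bar>D x (axis i 1)\<bar>)"
      using sum_abs[of "\<lambda>i. h$i * D x (axis i 1)" UNIV] by (simp add: abs_mult)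
    also have "\<dots> \<le> (\<Sum>i\<in>UNIV. norm h * \<bar>D x (axis i 1)\<bar>)"
      by (intro sum_mono mult_right_mono component_le_norm_cart) auto
    also have "\<dots> = norm h * G x" by (simp add: G_def sum_distrib_left)
    also have "\<dots> \<le> norm h * max L 0" by (intro mult_left_mono GL) auto
    finally show ?thesis by (simp add: mult.commute)
  qed
  have "\<bar>b x - b y\<bar> \<le> max L 0 * norm (x - y)" for x y
  proof -
    have "norm (b x - b y) \<le> max L 0 * norm (x - y)"
      by (rule differentiable_bound[where S=UNIV and f'=D])
         (auto intro!: hd onorm_le simp: Dbound)
    then show ?thesis by simp
  qed
  then show ?thesis by (intro exI[of _ "max L 0"]) auto
qed

lemma nn_integral_reflect:
  fixes h :: "'a::euclidean_space \<Rightarrow> ennreal"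
  assumes [measurable]: "h \<in> borel_measurable borel"
  shows "(\<integral>\<^sup>+ w. h w \<partial>lborel) = (\<integral>\<^sup>+ v. h (x - v) \<partial>lborel)"
proof -
  have e: "lborel = density (distr lborel borel ((-) x)) (\<lambda>_. 1)"
    using lborel_affine[of "-1" x] by simp
  have "(\<integral>\<^sup>+ w. h w \<partial>lborel) = (\<integral>\<^sup>+ w. h w \<partial>density (distr lborel borel ((-) x)) (\<lambda>_. 1))"
    using arg_cong[OF e, of "\<lambda>M. integral\<^sup>N M h"] .
  also have "\<dots> = (\<integral>\<^sup>+ v. h (x - v) \<partial>lborel)"
    by (simp add: nn_integral_density nn_integral_distr)
  finally show ?thesis .
qed

definition c1 :: "'a::euclidean_space itself \<Rightarrow> real" where
  "c1 _ = measure lborel (ball (0::'a) 1)"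

lemma c1_pos: "c1 TYPE('a::euclidean_space) > 0"
  unfolding c1_def by (rule content_ball_pos) simp

lemma ball_meas:
  fixes x :: "'a::euclidean_space"
  assumes "r \<ge> 0"
  shows "emeasure lborel (ball x r) = ennreal (r ^ DIM('a) * c1 TYPE('a))"
  using emeasure_lborel_ball_finite[of x r] content_ball_conv_unit_ball[OF assms, of x]
  by (simp add: emeasure_eq_ennreal_measure c1_def)

lemma ennreal_div_le_mult:
  fixes a b c :: ennreal
  assumes "a / b \<le> c" "b \<noteq> 0" "b \<noteq> top"
  shows "a \<le> c * b"
proof -
  have "a = (a / b) * b"
    using mult_divide_eq_ennreal[of b 1] assms by (simp add: ennreal_divide_times)
  also have "\<dots> \<le> c * b" using assms(1) by (rule mult_right_mono) simp
  finally show ?thesis .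
qed

lemma sup_ball_bound:
  fixes x :: "'a::euclidean_space"
  assumes "r > 0"
    and "(\<integral>\<^sup>+ y \<in> ball x r. g y \<partial>lborel) / emeasure lborel (ball x r) \<le> S"
  shows "(\<integral>\<^sup>+ y \<in> ball x r. g y \<partial>lborel) \<le> S * ennreal (r ^ DIM('a) * c1 TYPE('a))"
proof -
  have "emeasure lborel (ball x r) \<noteq> 0"
    using assms(1) c1_pos[where 'a='a] by (simp add: ball_meas)
  moreover have "emeasure lborel (ball x r) \<noteq> top"
    using emeasure_lborel_ball_finite[of x r] by simp
  ultimately show ?thesis using ennreal_div_le_mult[OF assms(2)] assms(1) by (simp add: ball_meas)
qed

lemma M_Omega_bound:
  fixes x :: "real^'n"
  assumes "r > 0"
  shows "(\<integral>\<^sup>+ y \<in> ball x r. ennreal \<bar>\<Omega> (x - y) * h y\<bar> \<partial>lborel)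
     \<le> M_Omega \<Omega> h x * ennreal (r ^ CARD('n) * c1 TYPE(real^'n))"
proof -
  have "(\<integral>\<^sup>+ y \<in> ball x r. ennreal \<bar>\<Omega> (x - y) * h y\<bar> \<partial>lborel) / emeasure lborel (ball x r) \<le> M_Omega \<Omega> h x"
    unfolding M_Omega_def by (rule SUP_upper) (use assms in auto)
  from sup_ball_bound[OF assms this] show ?thesis by simp
qed

lemma HL_bound:
  fixes x :: "real^'n"
  assumes "r > 0"
  shows "(\<integral>\<^sup>+ y \<in> ball x r. g y \<partial>lborel)
     \<le> HL_max g x * ennreal (r ^ CARD('n) * c1 TYPE(real^'n))"
proof -
  have "(\<integral>\<^sup>+ y \<in> ball x r. g y \<partial>lborel) / emeasure lborel (ball x r) \<le> HL_max g x"
    unfolding HL_max_def by (rule SUP_upper) (use assms in auto)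
  from sup_ball_bound[OF assms this] show ?thesis by simp
qed

lemma Kjt_meas2[measurable]:
  fixes \<Omega> :: "real^'n \<Rightarrow> real"
  assumes "\<Omega> \<in> borel_measurable borel" "f \<in> borel_measurable M" "g \<in> borel_measurable M"
  shows "(\<lambda>p. Kjt \<Omega> j (f p) (g p)) \<in> borel_measurable M"
  using measurable_compose[OF measurable_Pair[OF assms(2,3)] Kjt_meas[OF assms(1), of j]]
  by (simp add: borel_prod)

lemma phi_sc_meas[measurable]:
  fixes \<phi> :: "real^'n \<Rightarrow> real"
  assumes [measurable]: "\<phi> \<in> borel_measurable borel" "g \<in> borel_measurable M"
  shows "(\<lambda>p. phi_sc \<phi> k (g p)) \<in> borel_measurable M"
  unfolding phi_sc_def by measurable

lemma Kconv_supp: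
  fixes \<Omega> \<phi> :: "real^'n \<Rightarrow> real"
  assumes supp: "{x. \<phi> x \<noteq> 0} \<subseteq> cball 0 (1/4)"
    and t: "t \<le> 2"
    and nz: "Kconv \<Omega> \<phi> l j t z \<noteq> 0"
  shows "norm z \<le> 4 * 2 powr real_of_int j"
proof (rule ccontr)
  assume big: "\<not> norm z \<le> 4 * 2 powr real_of_int j"
  have "Kjt \<Omega> j t (z - w) * phi_sc \<phi> (j - int l) w = 0" for w
  proof (cases "phi_sc \<phi> (j - int l) w = 0")
    case False
    then have "\<phi> ((2 powr (- real_of_int (j - int l))) *\<^sub>R w) \<noteq> 0" by (simp add: phi_sc_def)
    then have "norm ((2 powr (- real_of_int (j - int l))) *\<^sub>R w) \<le> 1/4" using supp by auto
    then have h: "2 powr (- real_of_int (j - int l)) * norm w \<le> 1/4" by simp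
    define a where "a = 2 powr (real_of_int (j - int l))"
    have apos: "a > 0" unfolding a_def by simp
    have "2 powr (- real_of_int (j - int l)) = 1 / a" unfolding a_def by (rule powr_minus_divide)
    with h have "(1/a) * norm w \<le> 1/4" by simp
    with apos have "norm w \<le> a / 4" by (simp add: field_simps)
    then have "norm w \<le> 2 powr (real_of_int (j - int l)) / 4" by (simp add: a_def)
    also have "\<dots> \<le> 2 powr (real_of_int j) / 4" by simp
    finally have w: "norm w \<le> 2 powr (real_of_int j) / 4" .
    have "norm z \<le> norm (z - w) + norm w" using norm_triangle_ineq[of "z - w" w] by simp
    then have "norm (z - w) > 2 powr (real_of_int j) * t"
    proof -
      have sp: "2 powr (real_of_int j) > 0" by simp
      have "2 powr (real_of_int j) * t \<le> 2 powr (real_of_int j) * 2"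
        using t sp by (intro mult_left_mono) auto
      then show ?thesis using big w sp \<open>norm z \<le> norm (z - w) + norm w\<close> by linarith
    qed
    then show ?thesis by (simp add: Kjt_def)
  qed simp
  then have "(\<lambda>w. Kjt \<Omega> j t (z - w) * phi_sc \<phi> (j - int l) w) = (\<lambda>w. 0)" by (rule ext)
  then have "Kconv \<Omega> \<phi> l j t z = 0" unfolding Kconv_def by simp
  with nz show False by simp
qed

lemma Kjt_bound:
  fixes \<Omega> :: "real^'n \<Rightarrow> real"
  assumes t: "1 \<le> t" "t \<le> 2"
  shows "\<bar>Kjt \<Omega> j t u\<bar> \<le> ((1 / 2 powr real_of_int j) / (2 powr real_of_int j / 2) ^ (CARD('n) - 1))
            * \<bar>\<Omega> u\<bar> * indicator (ball 0 (4 * 2 powr real_of_int j)) u"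
proof -
  define s where "s = 2 powr real_of_int j"
  have sp: "s > 0" by (simp add: s_def)
  have h: "2 powr (real_of_int j - 1) = s / 2" by (simp add: s_def powr_diff)
  have K: "Kjt \<Omega> j t u = (1/s) * \<Omega> u / norm u ^ (CARD('n) - 1) * (if s / 2 * t < norm u \<and> norm u \<le> s * t then 1 else 0)"
    unfolding Kjt_def h indicator_def s_def[symmetric]
    by (simp add: s_def powr_minus_divide)
  show ?thesis
  proof (cases "s / 2 * t < norm u \<and> norm u \<le> s * t")
    case False
    then have "Kjt \<Omega> j t u = 0" by (simp only: K if_not_P[OF False] mult_zero_right if_False)
    then show ?thesis by simp
  next
    case True
    have "s / 2 \<le> s / 2 * t" using sp t by simp
    with True have u1: "s / 2 < norm u" by linarith
    have "s * t \<le> s * 2" using sp t by simp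
    with True sp have u2: "norm u < 4 * s" by linarith
    have "(s/2) ^ (CARD('n) - 1) \<le> norm u ^ (CARD('n) - 1)"
      using u1 sp by (intro power_mono) auto
    moreover have "(s/2) ^ (CARD('n) - 1) > 0" using sp by simp
    ultimately have "\<bar>\<Omega> u\<bar> / norm u ^ (CARD('n) - 1) \<le> \<bar>\<Omega> u\<bar> / (s/2) ^ (CARD('n) - 1)"
      by (intro divide_left_mono) auto
    then have "(1/s) * (\<bar>\<Omega> u\<bar> / norm u ^ (CARD('n) - 1)) \<le> (1/s) * (\<bar>\<Omega> u\<bar> / (s/2) ^ (CARD('n) - 1))"
      using sp by (intro mult_left_mono) auto
    moreover have "\<bar>Kjt \<Omega> j t u\<bar> = (1/s) * (\<bar>\<Omega> u\<bar> / norm u ^ (CARD('n) - 1))"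
      using True sp by (simp add: K abs_mult)
    moreover have "indicator (ball 0 (4 * s)) u = (1::real)" using u2 by simp
    ultimately show ?thesis by (simp add: s_def[symmetric])
  qed
qed

lemma F_bound:
  fixes \<Omega> \<phi> b f :: "real^'n \<Rightarrow> real"
  assumes \<Omega>m[measurable]: "\<Omega> \<in> borel_measurable borel"
    and fm[measurable]: "f \<in> borel_measurable borel"
    and \<phi>m[measurable]: "\<phi> \<in> borel_measurable borel"
    and phi_nn: "\<And>x. \<phi> x \<ge> 0" and phi_le: "\<And>x. \<phi> x \<le> P"
    and supp: "{x. \<phi> x \<noteq> 0} \<subseteq> cball 0 (1/4)"
    and Lip: "\<And>x y. \<bar>b x - b y\<bar> \<le> L * norm (x - y)" and L0: "L \<ge> 0"
    and t: "1 \<le> t" "t \<le> 2"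
  shows "ennreal \<bar>Fljb \<Omega> \<phi> l j b f x t\<bar> \<le>
    ennreal (4 * L * P * (c1 TYPE(real^'n))^2 * 2^(CARD('n) - 1) * 4^CARD('n) * 2 powr real_of_int j)
     * HL_max (M_Omega \<Omega> f) x"
proof -
  define s where "s = 2 powr real_of_int j"
  define k where "k = j - int l"
  define \<rho> where "\<rho> = 2 powr real_of_int k"
  define R where "R = 4 * s"
  define n where "n = CARD('n)"
  define k1 where "k1 = (1/s) / (s/2)^(n - 1)"
  define cc where "cc = c1 TYPE(real^'n)"
  define G where "G v y = ennreal (\<bar>Kjt \<Omega> j t (v - y)\<bar> * phi_sc \<phi> k (x - v))" for v y
  define I where "I v = (\<integral>\<^sup>+ y \<in> ball v R. ennreal \<bar>\<Omega> (v - y) * f y\<bar> \<partial>lborel)" for v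
  define H where "H = HL_max (M_Omega \<Omega> f) x"
  have sp: "s > 0" by (simp add: s_def)
  have \<rho>p: "\<rho> > 0" by (simp add: \<rho>_def)
  have Rp: "R > 0" using sp by (simp add: R_def)
  have k1p: "k1 \<ge> 0" using sp by (simp add: k1_def)
  have ccp: "cc > 0" unfolding cc_def by (rule c1_pos)
  have P0: "P \<ge> 0" using phi_nn[of 0] phi_le[of 0] by simp
  have psc_nn: "phi_sc \<phi> k y \<ge> 0" for y using phi_nn by (simp add: phi_sc_def)

  have Im[measurable]: "I \<in> borel_measurable borel"
  proof -
    have "I = (\<lambda>v. \<integral>\<^sup>+ y. ennreal \<bar>\<Omega> (v - y) * f y\<bar> * (if dist v y < R then 1 else 0) \<partial>lborel)"
      by (auto simp: I_def indicator_def intro!: ext nn_integral_cong)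
    also have "\<dots> \<in> borel_measurable borel" by measurable
    finally show ?thesis .
  qed
  have step1: "ennreal \<bar>Fljb \<Omega> \<phi> l j b f x t\<bar> \<le> (\<integral>\<^sup>+ y. ennreal \<bar>(b x - b y) * Kconv \<Omega> \<phi> l j t (x - y) * f y\<bar> \<partial>lborel)"
    using norm_integral_le_nn[of lborel "\<lambda>y. (b x - b y) * Kconv \<Omega> \<phi> l j t (x - y) * f y"]
    by (simp add: Fljb_def)
  have step2: "ennreal \<bar>(b x - b y) * Kconv \<Omega> \<phi> l j t (x - y) * f y\<bar>
      \<le> ennreal (4 * L * s) * (ennreal \<bar>f y\<bar> * (\<integral>\<^sup>+ v. G v y \<partial>lborel))" for y
  proof -
    have kc: "ennreal \<bar>Kconv \<Omega> \<phi> l j t (x - y)\<bar> \<le> (\<integral>\<^sup>+ v. G v y \<partial>lborel)"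
    proof -
      have "ennreal \<bar>Kconv \<Omega> \<phi> l j t (x - y)\<bar> \<le> (\<integral>\<^sup>+ w. ennreal (norm (Kjt \<Omega> j t (x - y - w) * phi_sc \<phi> k w)) \<partial>lborel)"
        using norm_integral_le_nn[of lborel "\<lambda>w. Kjt \<Omega> j t (x - y - w) * phi_sc \<phi> k w"]
        by (simp add: Kconv_def k_def)
      also have "\<dots> = (\<integral>\<^sup>+ w. ennreal (\<bar>Kjt \<Omega> j t (x - y - w)\<bar> * phi_sc \<phi> k w) \<partial>lborel)"
        using psc_nn by (simp add: abs_mult)
      also have "\<dots> = (\<integral>\<^sup>+ v. ennreal (\<bar>Kjt \<Omega> j t (x - y - (x - v))\<bar> * phi_sc \<phi> k (x - v)) \<partial>lborel)"
        by (rule nn_integral_reflect) measurable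
      also have "\<dots> = (\<integral>\<^sup>+ v. G v y \<partial>lborel)" by (simp add: G_def)
      finally show ?thesis .
    qed
    show ?thesis
    proof (cases "Kconv \<Omega> \<phi> l j t (x - y) = 0")
      case True then show ?thesis by simp
    next
      case False
      have "norm (x - y) \<le> 4 * s" using Kconv_supp[OF supp t(2) False] by (simp add: s_def)
      then have "L * norm (x - y) \<le> L * (4 * s)" using L0 by (rule mult_left_mono)
      then have "\<bar>b x - b y\<bar> \<le> 4 * L * s" using Lip[of x y] by simp
      then have bb: "ennreal \<bar>b x - b y\<bar> \<le> ennreal (4 * L * s)" by (rule ennreal_leI)
      have "ennreal \<bar>(b x - b y) * Kconv \<Omega> \<phi> l j t (x - y) * f y\<bar>
          = ennreal \<bar>b x - b y\<bar> * (ennreal \<bar>f y\<bar> * ennreal \<bar>Kconv \<Omega> \<phi> l j t (x - y)\<bar>)"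
        by (simp add: abs_mult ennreal_mult mult_ac)
      also have "\<dots> \<le> ennreal (4 * L * s) * (ennreal \<bar>f y\<bar> * (\<integral>\<^sup>+ v. G v y \<partial>lborel))"
        by (intro mult_mono bb kc) auto
      finally show ?thesis .
    qed
  qed
  have step3: "(\<integral>\<^sup>+ y. ennreal (4 * L * s) * (ennreal \<bar>f y\<bar> * (\<integral>\<^sup>+ v. G v y \<partial>lborel)) \<partial>lborel)
      = ennreal (4 * L * s) * (\<integral>\<^sup>+ v. ennreal (phi_sc \<phi> k (x - v)) *
            (\<integral>\<^sup>+ y. ennreal \<bar>Kjt \<Omega> j t (v - y)\<bar> * ennreal \<bar>f y\<bar> \<partial>lborel) \<partial>lborel)"
  proof -
    have Gm[measurable]: "(\<lambda>p. G (fst p) (snd p)) \<in> borel_measurable (lborel \<Otimes>\<^sub>M lborel)"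
      unfolding G_def by measurable
    have Gm2[measurable]: "(\<lambda>p. G (snd p) (fst p)) \<in> borel_measurable (lborel \<Otimes>\<^sub>M lborel)"
      unfolding G_def by measurable
    have "(\<integral>\<^sup>+ y. ennreal (4 * L * s) * (ennreal \<bar>f y\<bar> * (\<integral>\<^sup>+ v. G v y \<partial>lborel)) \<partial>lborel)
        = ennreal (4 * L * s) * (\<integral>\<^sup>+ y. ennreal \<bar>f y\<bar> * (\<integral>\<^sup>+ v. G v y \<partial>lborel) \<partial>lborel)"
      by (rule nn_integral_cmult) measurable
    also have "(\<integral>\<^sup>+ y. ennreal \<bar>f y\<bar> * (\<integral>\<^sup>+ v. G v y \<partial>lborel) \<partial>lborel)
        = (\<integral>\<^sup>+ y. (\<integral>\<^sup>+ v. ennreal \<bar>f y\<bar> * G v y \<partial>lborel) \<partial>lborel)"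
      unfolding G_def by (intro nn_integral_cong nn_integral_cmult[symmetric]) measurable
    also have "\<dots> = (\<integral>\<^sup>+ v. (\<integral>\<^sup>+ y. ennreal \<bar>f y\<bar> * G v y \<partial>lborel) \<partial>lborel)"
      by (rule lborel_pair.Fubini') measurable
    also have "\<dots> = (\<integral>\<^sup>+ v. ennreal (phi_sc \<phi> k (x - v)) *
            (\<integral>\<^sup>+ y. ennreal \<bar>Kjt \<Omega> j t (v - y)\<bar> * ennreal \<bar>f y\<bar> \<partial>lborel) \<partial>lborel)"
    proof (intro nn_integral_cong)
      fix v
      have "(\<integral>\<^sup>+ y. ennreal \<bar>f y\<bar> * G v y \<partial>lborel)
          = (\<integral>\<^sup>+ y. ennreal (phi_sc \<phi> k (x - v)) * (ennreal \<bar>Kjt \<Omega> j t (v - y)\<bar> * ennreal \<bar>f y\<bar>) \<partial>lborel)"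
        using psc_nn by (intro nn_integral_cong) (simp add: G_def ennreal_mult mult_ac)
      also have "\<dots> = ennreal (phi_sc \<phi> k (x - v)) * (\<integral>\<^sup>+ y. ennreal \<bar>Kjt \<Omega> j t (v - y)\<bar> * ennreal \<bar>f y\<bar> \<partial>lborel)"
        by (rule nn_integral_cmult) measurable
      finally show "(\<integral>\<^sup>+ y. ennreal \<bar>f y\<bar> * G v y \<partial>lborel)
          = ennreal (phi_sc \<phi> k (x - v)) * (\<integral>\<^sup>+ y. ennreal \<bar>Kjt \<Omega> j t (v - y)\<bar> * ennreal \<bar>f y\<bar> \<partial>lborel)" .
    qed
    finally show ?thesis .
  qed
  have step4: "(\<integral>\<^sup>+ y. ennreal \<bar>Kjt \<Omega> j t (v - y)\<bar> * ennreal \<bar>f y\<bar> \<partial>lborel) \<le> ennreal k1 * I v" for v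
  proof -
    have "(\<integral>\<^sup>+ y. ennreal \<bar>Kjt \<Omega> j t (v - y)\<bar> * ennreal \<bar>f y\<bar> \<partial>lborel)
       \<le> (\<integral>\<^sup>+ y. ennreal k1 * (ennreal \<bar>\<Omega> (v - y) * f y\<bar> * indicator (ball v R) y) \<partial>lborel)"
    proof (intro nn_integral_mono)
      fix y
      have kb: "\<bar>Kjt \<Omega> j t (v - y)\<bar> \<le> k1 * \<bar>\<Omega> (v - y)\<bar> * indicator (ball v R) y"
      proof -
        have ii: "indicator (ball 0 (4 * s)) (v - y) = (indicator (ball v R) y :: real)"
          by (simp add: indicator_def R_def dist_norm norm_minus_commute)
        show ?thesis using Kjt_bound[OF t, of \<Omega> j "v - y"]
          unfolding s_def[symmetric] k1_def[unfolded n_def, symmetric] ii by simp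
      qed
      have "\<bar>Kjt \<Omega> j t (v - y)\<bar> * \<bar>f y\<bar> \<le> k1 * \<bar>\<Omega> (v - y)\<bar> * indicator (ball v R) y * \<bar>f y\<bar>"
        by (intro mult_right_mono kb) auto
      then have "ennreal (\<bar>Kjt \<Omega> j t (v - y)\<bar> * \<bar>f y\<bar>) \<le> ennreal (k1 * (\<bar>\<Omega> (v - y) * f y\<bar> * indicator (ball v R) y))"
        by (intro ennreal_leI) (simp add: abs_mult mult_ac)
      then show "ennreal \<bar>Kjt \<Omega> j t (v - y)\<bar> * ennreal \<bar>f y\<bar>
          \<le> ennreal k1 * (ennreal \<bar>\<Omega> (v - y) * f y\<bar> * indicator (ball v R) y)"
        using k1p by (simp add: ennreal_mult ennreal_mult' indicator_mult_ennreal mult_ac)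
    qed
    also have "\<dots> = ennreal k1 * I v"
      unfolding I_def by (rule nn_integral_cmult) (simp add: indicator_def)
    finally show ?thesis .
  qed
  have step5: "(\<integral>\<^sup>+ v. ennreal (phi_sc \<phi> k (x - v)) * (ennreal k1 * I v) \<partial>lborel)
      \<le> ennreal (P * 2 powr (- real n * real_of_int k) * k1) * (\<integral>\<^sup>+ v \<in> ball x \<rho>. I v \<partial>lborel)"
  proof -
    have pb: "ennreal (phi_sc \<phi> k (x - v)) \<le> ennreal (P * 2 powr (- real n * real_of_int k)) * indicator (ball x \<rho>) v" for v
    proof (cases "\<phi> ((2 powr (- real_of_int k)) *\<^sub>R (x - v)) = 0")
      case True then show ?thesis by (simp add: phi_sc_def)
    next
      case False
      then have "norm ((2 powr (- real_of_int k)) *\<^sub>R (x - v)) \<le> 1/4" using supp by auto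
      then have h: "2 powr (- real_of_int k) * norm (x - v) \<le> 1/4" by simp
      have "2 powr (- real_of_int k) = 1 / \<rho>" unfolding \<rho>_def by (rule powr_minus_divide)
      with h \<rho>p have "norm (x - v) \<le> \<rho> / 4" by (simp add: field_simps)
      with \<rho>p have inb: "v \<in> ball x \<rho>" by (simp add: dist_norm)
      have "phi_sc \<phi> k (x - v) \<le> P * 2 powr (- real n * real_of_int k)"
        unfolding phi_sc_def n_def using phi_le by (simp add: mult.commute)
      then show ?thesis using inb by (simp add: ennreal_leI)
    qed
    have "(\<integral>\<^sup>+ v. ennreal (phi_sc \<phi> k (x - v)) * (ennreal k1 * I v) \<partial>lborel)
        \<le> (\<integral>\<^sup>+ v. ennreal (P * 2 powr (- real n * real_of_int k) * k1) * (I v * indicator (ball x \<rho>) v) \<partial>lborel)"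
    proof (intro nn_integral_mono)
      fix v
      have "ennreal (phi_sc \<phi> k (x - v)) * (ennreal k1 * I v)
          \<le> ennreal (P * 2 powr (- real n * real_of_int k)) * indicator (ball x \<rho>) v * (ennreal k1 * I v)"
        by (intro mult_right_mono pb) simp
      also have "\<dots> = ennreal (P * 2 powr (- real n * real_of_int k) * k1) * (I v * indicator (ball x \<rho>) v)"
        using P0 k1p by (simp add: ennreal_mult mult_ac)
      finally show "ennreal (phi_sc \<phi> k (x - v)) * (ennreal k1 * I v)
          \<le> ennreal (P * 2 powr (- real n * real_of_int k) * k1) * (I v * indicator (ball x \<rho>) v)" .
    qed
    also have "\<dots> = ennreal (P * 2 powr (- real n * real_of_int k) * k1) * (\<integral>\<^sup>+ v \<in> ball x \<rho>. I v \<partial>lborel)"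
    proof (rule nn_integral_cmult)
      have [measurable]: "ball x \<rho> \<in> sets borel" by simp
      show "(\<lambda>v. I v * indicator (ball x \<rho>) v) \<in> borel_measurable lborel" by measurable
    qed
    finally show ?thesis .
  qed
  have Ib: "I v \<le> M_Omega \<Omega> f v * ennreal (R ^ n * cc)" for v
    unfolding I_def n_def cc_def by (rule M_Omega_bound[OF Rp])
  have step6: "(\<integral>\<^sup>+ v \<in> ball x \<rho>. I v \<partial>lborel) \<le> ennreal (R ^ n * cc) * (\<integral>\<^sup>+ v \<in> ball x \<rho>. M_Omega \<Omega> f v \<partial>lborel)"
  proof -
    define K where "K = ennreal (R ^ n * cc)"
    have K0: "K \<noteq> 0" using Rp ccp by (simp add: K_def)
    have Kt: "K \<noteq> top" by (simp add: K_def)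
    have "(\<integral>\<^sup>+ v \<in> ball x \<rho>. I v \<partial>lborel) = (\<integral>\<^sup>+ v. K * (I v * indicator (ball x \<rho>) v / K) \<partial>lborel)"
      using K0 Kt by (intro nn_integral_cong) (simp add: ennreal_times_divide mult.commute[of K] mult_divide_eq_ennreal)
    also have "\<dots> = K * (\<integral>\<^sup>+ v. I v * indicator (ball x \<rho>) v / K \<partial>lborel)"
    proof (rule nn_integral_cmult)
      have [measurable]: "ball x \<rho> \<in> sets borel" by simp
      have [measurable]: "(\<lambda>v. K) \<in> borel_measurable borel" by simp
      show "(\<lambda>v. I v * indicator (ball x \<rho>) v / K) \<in> borel_measurable lborel" by measurable
    qed
    also have "\<dots> \<le> K * (\<integral>\<^sup>+ v. M_Omega \<Omega> f v * indicator (ball x \<rho>) v \<partial>lborel)"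
    proof (intro mult_left_mono nn_integral_mono)
      fix v
      have "I v * indicator (ball x \<rho>) v / K \<le> (M_Omega \<Omega> f v * indicator (ball x \<rho>) v * K) / K"
        using Ib[of v] unfolding K_def[symmetric]
        by (intro divide_right_mono_ennreal) (simp add: indicator_def mult_ac)
      also have "\<dots> = M_Omega \<Omega> f v * indicator (ball x \<rho>) v" using K0 Kt by (rule mult_divide_eq_ennreal)
      finally show "I v * indicator (ball x \<rho>) v / K \<le> M_Omega \<Omega> f v * indicator (ball x \<rho>) v" .
    qed simp
    finally show ?thesis by (simp add: K_def)
  qed
  have step7: "(\<integral>\<^sup>+ v \<in> ball x \<rho>. M_Omega \<Omega> f v \<partial>lborel) \<le> H * ennreal (\<rho> ^ n * cc)"
    unfolding H_def n_def cc_def by (rule HL_bound[OF \<rho>p])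
  have const: "4 * L * s * (P * 2 powr (- real n * real_of_int k) * k1) * (R ^ n * cc) * (\<rho> ^ n * cc)
     = 4 * L * P * cc^2 * 2^(n - 1) * 4^n * s"
  proof -
    have e1: "\<rho> ^ n * 2 powr (- real n * real_of_int k) = 1"
    proof -
      have "\<rho> ^ n = 2 powr (real_of_int k * real n)"
        unfolding \<rho>_def by (simp add: powr_realpow[symmetric] powr_powr)
      then show ?thesis by (simp add: powr_add[symmetric])
    qed
    obtain m where nm: "n = Suc m" unfolding n_def using zero_less_card_finite not0_implies_Suc by blast
    have e2: "k1 * R ^ n = 2^(n-1) * 4^n"
      unfolding k1_def R_def nm using sp by (simp add: power_divide power_mult_distrib field_simps)
    have "4 * L * s * (P * 2 powr (- real n * real_of_int k) * k1) * (R ^ n * cc) * (\<rho> ^ n * cc)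
        = (4 * L * P * cc^2 * s) * (k1 * R ^ n) * (\<rho> ^ n * 2 powr (- real n * real_of_int k))"
      by (simp add: power2_eq_square mult_ac)
    also have "\<dots> = 4 * L * P * cc^2 * 2^(n - 1) * 4^n * s" unfolding e1 e2 by (simp add: mult_ac)
    finally show ?thesis .
  qed
  have "ennreal \<bar>Fljb \<Omega> \<phi> l j b f x t\<bar> \<le>
     ennreal (4 * L * s) * (\<integral>\<^sup>+ v. ennreal (phi_sc \<phi> k (x - v)) * (ennreal k1 * I v) \<partial>lborel)"
  proof -
    have "ennreal \<bar>Fljb \<Omega> \<phi> l j b f x t\<bar> \<le> (\<integral>\<^sup>+ y. ennreal (4 * L * s) * (ennreal \<bar>f y\<bar> * (\<integral>\<^sup>+ v. G v y \<partial>lborel)) \<partial>lborel)"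
      using step1 by (rule order_trans) (intro nn_integral_mono step2)
    also have "\<dots> \<le> ennreal (4 * L * s) * (\<integral>\<^sup>+ v. ennreal (phi_sc \<phi> k (x - v)) * (ennreal k1 * I v) \<partial>lborel)"
      unfolding step3 by (intro mult_left_mono nn_integral_mono step4) auto
    finally show ?thesis .
  qed
  also have "\<dots> \<le> ennreal (4 * L * s) * (ennreal (P * 2 powr (- real n * real_of_int k) * k1) *
      (ennreal (R ^ n * cc) * (H * ennreal (\<rho> ^ n * cc))))"
    by (intro mult_left_mono order_trans[OF step5] order_trans[OF step6] step7) auto
  also have "\<dots> = ennreal (4 * L * s * (P * 2 powr (- real n * real_of_int k) * k1) * (R ^ n * cc) * (\<rho> ^ n * cc)) * H"
    using sp P0 k1p ccp L0 Rp \<rho>p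
    by (simp add: ennreal_mult mult_ac)
  also have "\<dots> = ennreal (4 * L * P * (c1 TYPE(real^'n))^2 * 2^(CARD('n) - 1) * 4^CARD('n) * 2 powr real_of_int j) * H"
    unfolding const by (simp add: cc_def n_def s_def)
  finally show ?thesis by (simp add: H_def)
qed

lemma Kconv_meas:
  fixes \<Omega> \<phi> :: "real^'n \<Rightarrow> real"
  assumes [measurable]: "\<Omega> \<in> borel_measurable borel" "\<phi> \<in> borel_measurable borel"
  shows "(\<lambda>p. Kconv \<Omega> \<phi> l j (fst p) (snd p)) \<in> borel_measurable (borel \<Otimes>\<^sub>M borel)"
  unfolding Kconv_def by measurable

lemma Kconv_meas2[measurable]:
  fixes \<Omega> \<phi> :: "real^'n \<Rightarrow> real"
  assumes "\<Omega> \<in> borel_measurable borel" "\<phi> \<in> borel_measurable borel"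
    "f \<in> borel_measurable M" "g \<in> borel_measurable M"
  shows "(\<lambda>p. Kconv \<Omega> \<phi> l j (f p) (g p)) \<in> borel_measurable M"
  using measurable_compose[OF measurable_Pair[OF assms(3,4)] Kconv_meas[OF assms(1,2), of l j]]
  by (simp add: borel_prod)

lemma Fljb_meas:
  fixes \<Omega> \<phi> b f :: "real^'n \<Rightarrow> real"
  assumes [measurable]: "\<Omega> \<in> borel_measurable borel" "\<phi> \<in> borel_measurable borel"
    "b \<in> borel_measurable borel" "f \<in> borel_measurable borel"
  shows "(\<lambda>t. Fljb \<Omega> \<phi> l j b f x t) \<in> borel_measurable borel"
  unfolding Fljb_def by measurable

lemma count_int_meas:
  fixes g :: "'a \<Rightarrow> int \<Rightarrow> ennreal"
  assumes "\<And>j. (\<lambda>t. g t j) \<in> borel_measurable M"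
  shows "(\<lambda>t. \<integral>\<^sup>+ j. g t j \<partial>count_space UNIV) \<in> borel_measurable M"
proof -
  interpret C: sigma_finite_measure "count_space (UNIV::int set)"
    by (rule sigma_finite_measure_count_space)
  have "(\<lambda>(j, t). g t j) \<in> borel_measurable (count_space UNIV \<Otimes>\<^sub>M M)"
    by (rule measurable_pair_measure_countable1) (use assms in auto)
  from measurable_pair_swap[OF this] have "case_prod g \<in> borel_measurable (M \<Otimes>\<^sub>M count_space UNIV)"
    by (simp add: case_prod_beta)
  then show ?thesis by (rule C.borel_measurable_nn_integral)
qed

lemma geom_sum_bound:
  fixes B :: real and j0 :: int
  shows "(\<integral>\<^sup>+ j. ennreal ((B * 2 powr real_of_int j)^2) \<partial>count_space {..j0})
      \<le> ennreal ((2 * B * 2 powr real_of_int j0)^2)"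
proof -
  define a where "a = (B * 2 powr real_of_int j0)^2"
  have a0: "a \<ge> 0" by (simp add: a_def)
  have bij: "bij_betw (\<lambda>k::nat. j0 - int k) UNIV {..j0}"
    by (rule bij_betwI[where g="\<lambda>j. nat (j0 - j)"]) auto
  have hk: "(B * 2 powr real_of_int (j0 - int k))^2 = a * (1/4)^k" for k :: nat
  proof -
    have e: "2 powr real_of_int (j0 - int k) = 2 powr real_of_int j0 / 2^k"
      by (simp add: powr_diff powr_realpow)
    have q: "(1/4::real)^k = 1 / (2^k)^2"
    proof -
      have "(2::real)^k * 2^k = 4^k" by (simp flip: power_mult_distrib)
      then show ?thesis by (simp add: power_one_over power2_eq_square)
    qed
    show ?thesis unfolding e a_def q by (simp add: power_divide power_mult_distrib)
  qed
  have "(\<integral>\<^sup>+ j. ennreal ((B * 2 powr real_of_int j)^2) \<partial>count_space {..j0})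
      = (\<integral>\<^sup>+ k. ennreal ((B * 2 powr real_of_int (j0 - int k))^2) \<partial>count_space UNIV)"
    using nn_integral_bij_count_space[OF bij, of "\<lambda>j. ennreal ((B * 2 powr real_of_int j)^2)"] by simp
  also have "\<dots> = (\<Sum>k. ennreal (a * (1/4)^k))"
    unfolding nn_integral_count_space_nat hk ..
  also have "\<dots> = ennreal (\<Sum>k. a * (1/4)^k)"
    using a0 by (intro suminf_ennreal2) (auto intro!: summable_mult summable_geometric)
  also have "(\<Sum>k. a * (1/4::real)^k) = a * (4/3)"
    using suminf_geometric[of "1/4::real"] by (simp add: suminf_mult)
  also have "ennreal (a * (4/3)) \<le> ennreal ((2 * B * 2 powr real_of_int j0)^2)"
    using a0 by (intro ennreal_leI) (simp add: a_def power_mult_distrib)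
  finally show ?thesis .
qed

theorem lemma3p2:
  fixes \<Omega> b \<phi> :: "real^'n \<Rightarrow> real"
  assumes n2: "CARD('n) \<ge> 2"
    and hom: "\<And>s x. s > 0 \<Longrightarrow> \<Omega> (s *\<^sub>R x) = \<Omega> x"
    and int: "integrable sphere_measure \<Omega>"
    and b: "C0_infty b"
    and phi_nn: "\<And>x. \<phi> x \<ge> 0"
    and phi_sm: "C0_infty \<phi>"
    and phi_int: "(LINT x|lborel. \<phi> x) = 1"
    and phi_supp: "{x. \<phi> x \<noteq> 0} \<subseteq> cball 0 (1/4)"
  shows "\<exists>C::real. \<forall>(l::nat) (j0::int) (f::real^'n \<Rightarrow> real) x.
           j0 < 0 \<longrightarrow> (\<forall>K. compact K \<longrightarrow> set_integrable lborel K f) \<longrightarrow>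
             Mtilde \<Omega> \<phi> l {j0<..} b f x
               \<le> Mtilde \<Omega> \<phi> l UNIV b f x + ennreal (C * 2 powr real_of_int j0) * HL_max (M_Omega \<Omega> f) x
           \<and> Mtilde \<Omega> \<phi> l UNIV b f x
               \<le> Mtilde \<Omega> \<phi> l {j0<..} b f x + ennreal (C * 2 powr real_of_int j0) * HL_max (M_Omega \<Omega> f) x"
proof -
  obtain L where L0: "L \<ge> 0" and Lip: "\<And>x y. \<bar>b x - b y\<bar> \<le> L * norm (x - y)"
    using C0_lipschitz[OF b] by blast
  obtain P where P0: "P \<ge> 0" and Pb: "\<And>x. \<bar>\<phi> x\<bar> \<le> P"
    using C0_bounded[OF phi_sm] by blast
  have phi_le: "\<phi> x \<le> P" for x using Pb[of x] by simp
  have \<Omega>m[measurable]: "\<Omega> \<in> borel_measurable borel" by (rule Omega_meas[OF int])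
  have \<phi>m[measurable]: "\<phi> \<in> borel_measurable borel"
    by (rule borel_measurable_continuous_onI[OF C0_cont[OF phi_sm]])
  have bm[measurable]: "b \<in> borel_measurable borel"
    by (rule borel_measurable_continuous_onI[OF C0_cont[OF b]])
  define B where "B = 4 * L * P * (c1 TYPE(real^'n))^2 * 2^(CARD('n) - 1) * 4^CARD('n)"
  have B0: "B \<ge> 0" using L0 P0 by (simp add: B_def)
  show ?thesis
  proof (intro exI[of _ "2 * B"] allI impI)
    fix l :: nat and j0 :: int and f :: "real^'n \<Rightarrow> real" and x :: "real^'n"
    assume j0: "j0 < 0" and loc: "\<forall>K. compact K \<longrightarrow> set_integrable lborel K f"
    have fm[measurable]: "f \<in> borel_measurable borel" by (rule f_meas[OF loc])
    define \<Phi> where "\<Phi> t j = ennreal ((Fljb \<Omega> \<phi> l j b f x t)^2)" for t j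
    define H where "H = HL_max (M_Omega \<Omega> f) x"
    define A where "A J t = (\<integral>\<^sup>+ j. \<Phi> t j \<partial>count_space J)" for J t
    have Mt: "Mtilde \<Omega> \<phi> l J b f x = esqrt (\<integral>\<^sup>+ t \<in> {1..2}. A J t \<partial>lborel)" for J
      by (simp add: Mtilde_def A_def \<Phi>_def)
    have Fm[measurable]: "(\<lambda>t. Fljb \<Omega> \<phi> l j b f x t) \<in> borel_measurable borel" for j
      by (rule Fljb_meas[OF \<Omega>m \<phi>m bm fm])
    have \<Phi>m[measurable]: "(\<lambda>t. \<Phi> t j) \<in> borel_measurable borel" for j
      unfolding \<Phi>_def by measurable
    have Am[measurable]: "(\<lambda>t. A J t) \<in> borel_measurable borel" for J
    proof -
      have "(\<lambda>t. \<integral>\<^sup>+ j. \<Phi> t j * indicator J j \<partial>count_space UNIV) \<in> borel_measurable borel"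
        by (rule count_int_meas) measurable
      moreover have "A J t = (\<integral>\<^sup>+ j. \<Phi> t j * indicator J j \<partial>count_space UNIV)" for t
        unfolding A_def by (cases "J = UNIV") (simp_all add: nn_integral_count_space_indicator)
      ultimately show ?thesis by simp
    qed
    have split: "A UNIV t = A {j0<..} t + A {..j0} t" for t
    proof -
      have "A UNIV t = (\<integral>\<^sup>+ j. \<Phi> t j * indicator {j0<..} j + \<Phi> t j * indicator {..j0} j \<partial>count_space UNIV)"
        unfolding A_def by (intro nn_integral_cong) (auto simp: indicator_def)
      also have "\<dots> = A {j0<..} t + A {..j0} t"
        unfolding A_def by (subst nn_integral_add) (auto simp: nn_integral_count_space_indicator)
      finally show ?thesis .
    qed
    define X where "X = ennreal ((2 * B * 2 powr real_of_int j0)^2)"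
    have A2b: "A {..j0} t \<le> X * H^2" if t: "1 \<le> t" "t \<le> 2" for t
    proof -
      have "\<Phi> t j \<le> ennreal ((B * 2 powr real_of_int j)^2) * H^2" for j
      proof -
        have fb: "ennreal \<bar>Fljb \<Omega> \<phi> l j b f x t\<bar> \<le> ennreal (B * 2 powr real_of_int j) * H"
          using F_bound[OF \<Omega>m fm \<phi>m phi_nn phi_le phi_supp Lip L0 t, of l j x]
          by (simp add: B_def H_def)
        have "\<Phi> t j = (ennreal \<bar>Fljb \<Omega> \<phi> l j b f x t\<bar>)^2"
          by (simp add: \<Phi>_def ennreal_power)
        also have "\<dots> \<le> (ennreal (B * 2 powr real_of_int j) * H)^2"
          by (rule power_mono[OF fb]) simp
        also have "\<dots> = ennreal ((B * 2 powr real_of_int j)^2) * H^2"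
          using B0 by (simp add: power_mult_distrib ennreal_power)
        finally show ?thesis .
      qed
      then have "A {..j0} t \<le> (\<integral>\<^sup>+ j. ennreal ((B * 2 powr real_of_int j)^2) * H^2 \<partial>count_space {..j0})"
        unfolding A_def by (intro nn_integral_mono) auto
      also have "\<dots> = (\<integral>\<^sup>+ j. ennreal ((B * 2 powr real_of_int j)^2) \<partial>count_space {..j0}) * H^2"
        by (rule nn_integral_multc) simp
      also have "\<dots> \<le> X * H^2"
        unfolding X_def by (intro mult_right_mono geom_sum_bound) simp
      finally show ?thesis .
    qed
    have int2: "(\<integral>\<^sup>+ t \<in> {1..2}. A {..j0} t \<partial>lborel) \<le> (ennreal (2 * B * 2 powr real_of_int j0) * H)^2"
    proof -
      have "(\<integral>\<^sup>+ t \<in> {1..2}. A {..j0} t \<partial>lborel) \<le> (\<integral>\<^sup>+ t. X * H^2 * indicator {1..2::real} t \<partial>lborel)"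
        by (intro nn_integral_mono) (auto simp: indicator_def intro: A2b)
      also have "\<dots> = X * H^2"
        by (subst nn_integral_cmult_indicator) auto
      also have "\<dots> = (ennreal (2 * B * 2 powr real_of_int j0) * H)^2"
        using B0 by (simp add: X_def power_mult_distrib ennreal_power)
      finally show ?thesis .
    qed
    have full: "(\<integral>\<^sup>+ t \<in> {1..2}. A UNIV t \<partial>lborel)
        = (\<integral>\<^sup>+ t \<in> {1..2}. A {j0<..} t \<partial>lborel) + (\<integral>\<^sup>+ t \<in> {1..2}. A {..j0} t \<partial>lborel)"
      unfolding split distrib_right
      by (rule nn_integral_add) measurable
    show "Mtilde \<Omega> \<phi> l {j0<..} b f x
               \<le> Mtilde \<Omega> \<phi> l UNIV b f x + ennreal (2 * B * 2 powr real_of_int j0) * HL_max (M_Omega \<Omega> f) x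
           \<and> Mtilde \<Omega> \<phi> l UNIV b f x
               \<le> Mtilde \<Omega> \<phi> l {j0<..} b f x + ennreal (2 * B * 2 powr real_of_int j0) * HL_max (M_Omega \<Omega> f) x"
    proof
      have "Mtilde \<Omega> \<phi> l {j0<..} b f x \<le> Mtilde \<Omega> \<phi> l UNIV b f x"
        unfolding Mt full by (rule esqrt_mono) simp
      then show "Mtilde \<Omega> \<phi> l {j0<..} b f x
               \<le> Mtilde \<Omega> \<phi> l UNIV b f x + ennreal (2 * B * 2 powr real_of_int j0) * HL_max (M_Omega \<Omega> f) x"
        by (rule order_trans) simp
      show "Mtilde \<Omega> \<phi> l UNIV b f x
               \<le> Mtilde \<Omega> \<phi> l {j0<..} b f x + ennreal (2 * B * 2 powr real_of_int j0) * HL_max (M_Omega \<Omega> f) x"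
        unfolding Mt H_def[symmetric] by (rule esqrt_add_le) (simp add: full add_left_mono int2)
    qed
  qed
qed

end
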